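(* Consider the equioriented quiver $1'\xrightarrow{a_0}1\xrightarrow{a_1}2\to\cdots\to r\xrightarrow{a_r}r+1$, with dimension $m$ at the framed vertex $1'$ and dimension $n$ at the nonframed vertices $1,\dots,r+1$, with the complete standard filtration at the nonframed vertices. Then $F^{\bullet}Rep(Q,\beta)=M_{n\times m}\oplus\mathfrak{b}^{\oplus r}$, and for every $1\le p\le n$, every $0\le k\le r$ and every $1\le i_1<\cdots<i_{n-p+1}\le m$, the minor of the $n\times m$ matrix $A_kA_{k-1}\cdots A_0$ with rows $p,p+1,\dots,n$ and columns $i_1,\dots,i_{n-p+1}$ is a $\mathbb{U}_\beta$-invariant polynomial.
   Context: The representation space consists of tuples $(A_0,A_1,\dots,A_r)$ with $A_0\in M_{n\times m}$ an arbitrary complex $n\times m$ matrix (no filtration at the framed vertex) and $A_1,\dots,A_r$ upper triangular $n\times n$ matrices ($\mathfrak{b}$ the upper triangular matrices). $\mathbb{U}_\beta=U^{r+1}$, with $U$ the upper unitriangular $n\times n$ matrices, acting by $(u_1,\dots,u_{r+1})\cdot(A_0,A_1,\dots,A_r)=(u_1A_0,u_2A_1u_1^{-1},\dots,u_{r+1}A_ru_r^{-1})$. *)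

theory Defs
  imports "Jordan_Normal_Form.Gauss_Jordan_Elimination" "Jordan_Normal_Form.DL_Submatrix"
    "Jordan_Normal_Form.Determinant"
begin

definition unitriangular :: "nat \<Rightarrow> complex mat \<Rightarrow> bool" where
  "unitriangular n u \<longleftrightarrow> u \<in> carrier_mat n n \<and> upper_triangular u \<and> (\<forall>i<n. u $$ (i,i) = 1)"

text \<open>Inverse matrix (via Gauss-Jordan); for unitriangular matrices it exists.\<close>
definition minv :: "complex mat \<Rightarrow> complex mat" where
  "minv u = the (mat_inverse u)"

text \<open>The filtered representation space: tuples (A_0,...,A_r), A_0 arbitrary n x m,
  A_1..A_r upper triangular n x n (i.e. M_{n x m} + b^r).\<close>
definition FRep :: "nat \<Rightarrow> nat \<Rightarrow> nat \<Rightarrow> (nat \<Rightarrow> complex mat) set" where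
  "FRep n m r = {A. A 0 \<in> carrier_mat n m \<and>
     (\<forall>k\<in>{1..r}. A k \<in> carrier_mat n n \<and> upper_triangular (A k))}"

text \<open>The group U_beta = U^(r+1), elements indexed u_1..u_{r+1}.\<close>
definition Ubeta :: "nat \<Rightarrow> nat \<Rightarrow> (nat \<Rightarrow> complex mat) set" where
  "Ubeta n r = {u. \<forall>k\<in>{1..r+1}. unitriangular n (u k)}"

definition act :: "(nat \<Rightarrow> complex mat) \<Rightarrow> (nat \<Rightarrow> complex mat) \<Rightarrow> (nat \<Rightarrow> complex mat)" where
  "act u A = (\<lambda>k. if k = 0 then u 1 * A 0 else u (k+1) * A k * minv (u k))"

fun pathprod :: "(nat \<Rightarrow> complex mat) \<Rightarrow> nat \<Rightarrow> complex mat" where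
  "pathprod A 0 = A 0"
| "pathprod A (Suc k) = A (Suc k) * pathprod A k"

text \<open>Minor with rows p..n and columns i_1<...<i_{n-p+1} (1-based indices).\<close>
definition minor :: "nat \<Rightarrow> nat \<Rightarrow> (nat \<Rightarrow> nat) \<Rightarrow> complex mat \<Rightarrow> complex" where
  "minor n p i X = det (submatrix X {p-1..<n} ((\<lambda>j. i j - 1) ` {1..n-p+1}))"

end

theory Submission
  imports Defs
begin

lemma det_unitri: assumes "v \<in> carrier_mat N N" "upper_triangular v" "\<forall>i<N. v $$ (i,i) = 1"
  shows "det v = 1"
  using assms by (simp add: det_upper_triangular[OF assms(2,1)] prod_list_diag_prod)

lemma minv_props: assumes "unitriangular N v"
  shows "v * minv v = 1\<^sub>m N \<and> minv v * v = 1\<^sub>m N \<and> minv v \<in> carrier_mat N N"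
proof -
  have c: "v \<in> carrier_mat N N" "upper_triangular v" "\<forall>i<N. v $$ (i,i) = 1"
    using assms unfolding unitriangular_def by auto
  have "det v = 1" using det_unitri[OF c] .
  have "mat_inverse v \<noteq> None"
  proof
    assume "mat_inverse v = None"
    from mat_inverse(1)[OF c(1) this, where b="()"] det_non_zero_imp_unit[OF c(1), where b="()"] \<open>det v = 1\<close>
    show False by auto
  qed
  then obtain B where B: "mat_inverse v = Some B" by auto
  show ?thesis using mat_inverse(2)[OF c(1) B] B unfolding minv_def by auto
qed

lemma inv_upper:
  fixes u B :: "complex mat"
  assumes u: "u \<in> carrier_mat N N" "upper_triangular u" "\<forall>i<N. u $$ (i,i) = 1"
    and B: "B \<in> carrier_mat N N" "u * B = 1\<^sub>m N"
  shows "upper_triangular B"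
proof -
  have main: "\<forall>i. N - i \<le> d \<longrightarrow> i < N \<longrightarrow> j < i \<longrightarrow> B $$ (i,j) = 0" for d j
  proof (induction d)
    case 0 then show ?case by auto
  next
    case (Suc d)
    show ?case
    proof (intro allI impI)
      fix i assume a: "N - i \<le> Suc d" "i < N" "j < i"
      have "0 = (u * B) $$ (i,j)" using B a by auto
      also have "\<dots> = (\<Sum>l\<in>{0..<N}. u $$ (i,l) * B $$ (l,j))"
        using u B(1) a by (auto simp: scalar_prod_def intro!: sum.cong)
      also have "\<dots> = u $$ (i,i) * B $$ (i,j) + (\<Sum>l\<in>{0..<N} - {i}. u $$ (i,l) * B $$ (l,j))"
        using a by (subst sum.remove[of _ i]) auto
      also have "(\<Sum>l\<in>{0..<N} - {i}. u $$ (i,l) * B $$ (l,j)) = 0"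
      proof (rule sum.neutral, intro ballI)
        fix l assume l: "l \<in> {0..<N} - {i}"
        show "u $$ (i,l) * B $$ (l,j) = 0"
        proof (cases "l < i")
          case True
          then have "u $$ (i,l) = 0" using upper_triangularD[OF u(2), of l i] u(1) a by auto
          then show ?thesis by simp
        next
          case False
          then have "N - l \<le> d" using a l by auto
          then show ?thesis using Suc.IH l a False by auto
        qed
      qed
      finally show "B $$ (i,j) = 0" using u a by simp
    qed
  qed
  show ?thesis
  proof (rule upper_triangularI)
    fix i j assume "j < i" "i < dim_row B"
    then show "B $$ (i,j) = 0" using main[of N j] B by auto
  qed
qed

lemma pick_interval: "c < b - a \<Longrightarrow> pick {a..<b} c = a + c"
proof (induction c)
  case 0 then show ?case by (auto intro!: Least_equality)
next
  case (Suc c) then show ?case by (auto intro!: Least_equality)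
qed

lemma sub_mult:
  fixes u X :: "complex mat"
  assumes u: "u \<in> carrier_mat n n" "upper_triangular u" and X: "X \<in> carrier_mat n m"
    and p: "1 \<le> p" "p \<le> n"
  shows "submatrix (u * X) {p-1..<n} C = submatrix u {p-1..<n} {p-1..<n} * submatrix X {p-1..<n} C"
    (is "?L = ?R")
proof -
  define c where "c = n - (p - 1)"
  have sR: "{i. i<n \<and> i\<in>{p-1..<n}} = {p-1..<n}" by auto
  have cR: "card {i. i<n \<and> i\<in>{p-1..<n}} = c" unfolding sR c_def by simp
  show ?thesis
  proof (rule eq_matI)
    show "dim_row ?L = dim_row ?R" using u X by (simp add: dim_submatrix)
    show "dim_col ?L = dim_col ?R" using u X by (simp add: dim_submatrix)
    fix a b assume ab: "a < dim_row ?R" "b < dim_col ?R"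
    have a: "a < c" and b: "b < card {j. j<m \<and> j\<in>C}"
      using ab u X cR by (auto simp: dim_submatrix)
    have pa: "pick {p-1..<n} a = p - 1 + a" using a unfolding c_def by (intro pick_interval) auto
    have L: "?L $$ (a,b) = (u*X) $$ (p - 1 + a, pick C b)"
      using submatrix_index[of a "u*X" "{p-1..<n}" b C] a b u X cR pa by auto
    also have "\<dots> = (\<Sum>l\<in>{0..<n}. u $$ (p-1+a, l) * X $$ (l, pick C b))"
    proof -
      have "pick C b < m"
      proof -
        have "b < card {j \<in> C. j < m}" using b by (metis set_le_in)
        from pick_in_set_le[OF this] have "pick {j \<in> C. j < m} b < m" by auto
        moreover have "pick C b = pick {a. a < m \<and> a \<in> C} b" using pick_reduce_set[OF b] .
        ultimately show ?thesis by (metis set_le_in)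
      qed
      then show ?thesis using a u X unfolding c_def by (auto simp: scalar_prod_def intro!: sum.cong)
    qed
    also have "\<dots> = (\<Sum>l\<in>{p-1..<n}. u $$ (p-1+a, l) * X $$ (l, pick C b))"
    proof (rule sum.mono_neutral_right)
      show "\<forall>l\<in>{0..<n} - {p-1..<n}. u $$ (p-1+a, l) * X $$ (l, pick C b) = 0"
      proof
        fix l assume "l \<in> {0..<n} - {p-1..<n}"
        then have "u $$ (p-1+a, l) = 0" using upper_triangularD[OF u(2), of l "p-1+a"] u(1) a
          unfolding c_def by auto
        then show "u $$ (p-1+a, l) * X $$ (l, pick C b) = 0" by simp
      qed
    qed auto
    also have "\<dots> = (\<Sum>t\<in>{0..<c}. u $$ (p-1+a, p-1+t) * X $$ (p-1+t, pick C b))"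
    proof -
      have eq: "{p-1..<n} = (\<lambda>t. p-1+t) ` {0..<c}" unfolding c_def
      proof
        show "{p-1..<n} \<subseteq> (\<lambda>t. p-1+t) ` {0..<n-(p-1)}"
        proof
          fix x assume x: "x \<in> {p-1..<n}"
          then have "x = p-1 + (x-(p-1)) \<and> x-(p-1) \<in> {0..<n-(p-1)}" by auto
          then show "x \<in> (\<lambda>t. p-1+t) ` {0..<n-(p-1)}" by blast
        qed
      qed auto
      show ?thesis unfolding eq by (subst sum.reindex) (auto simp: inj_on_def)
    qed
    also have "\<dots> = ?R $$ (a,b)"
    proof -
      have "?R $$ (a,b) = (\<Sum>t\<in>{0..<c}. submatrix u {p-1..<n} {p-1..<n} $$ (a,t) * submatrix X {p-1..<n} C $$ (t,b))"
        using ab u X cR by (auto simp: scalar_prod_def dim_submatrix intro!: sum.cong)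
      also have "\<dots> = (\<Sum>t\<in>{0..<c}. u $$ (p-1+a, p-1+t) * X $$ (p-1+t, pick C b))"
      proof (rule sum.cong)
        fix t assume t: "t \<in> {0..<c}"
        have pt: "pick {p-1..<n} t = p - 1 + t" using t unfolding c_def by (intro pick_interval) auto
        show "submatrix u {p-1..<n} {p-1..<n} $$ (a,t) * submatrix X {p-1..<n} C $$ (t,b) =
              u $$ (p-1+a, p-1+t) * X $$ (p-1+t, pick C b)"
          using submatrix_index[of a u "{p-1..<n}" t "{p-1..<n}"]
            submatrix_index[of t X "{p-1..<n}" b C] a b t u X cR pa pt by auto
      qed simp
      finally show ?thesis by simp
    qed
    finally show "?L $$ (a,b) = ?R $$ (a,b)" .
  qed
qed


lemma ut_mult:
  fixes A B :: "complex mat"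
  assumes "A \<in> carrier_mat N N" "B \<in> carrier_mat N N" "upper_triangular A" "upper_triangular B"
  shows "upper_triangular (A * B)"
proof (rule upper_triangularI)
  fix i j assume ij: "j < i" "i < dim_row (A * B)"
  have "(A*B) $$ (i,j) = (\<Sum>l\<in>{0..<N}. A $$ (i,l) * B $$ (l,j))"
    using assms ij by (auto simp: scalar_prod_def intro!: sum.cong)
  also have "\<dots> = 0"
  proof (rule sum.neutral, intro ballI)
    fix l assume l: "l \<in> {0..<N}"
    show "A $$ (i,l) * B $$ (l,j) = 0"
    proof (cases "l < i")
      case True
      then have "A $$ (i,l) = 0" using upper_triangularD[OF assms(3), of l i] assms ij by auto
      then show ?thesis by simp
    next
      case False
      then have "B $$ (l,j) = 0" using upper_triangularD[OF assms(4), of j l] assms ij l by auto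
      then show ?thesis by simp
    qed
  qed
  finally show "(A*B) $$ (i,j) = 0" .
qed

lemma sub_det1:
  assumes v: "unitriangular n v" and p: "1 \<le> p" "p \<le> n"
  shows "det (submatrix v {p-1..<n} {p-1..<n}) = 1 \<and> submatrix v {p-1..<n} {p-1..<n} \<in> carrier_mat (n-(p-1)) (n-(p-1))"
proof -
  have c: "v \<in> carrier_mat n n" "upper_triangular v" "\<forall>i<n. v $$ (i,i) = 1"
    using v unfolding unitriangular_def by auto
  define S where "S = submatrix v {p-1..<n} {p-1..<n}"
  have sR: "{i. i<n \<and> i\<in>{p-1..<n}} = {p-1..<n}" by auto
  have cR: "card {i. i<n \<and> i\<in>{p-1..<n}} = n-(p-1)" unfolding sR by simp
  have SC: "S \<in> carrier_mat (n-(p-1)) (n-(p-1))" unfolding S_def carrier_mat_def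
    using c(1) cR by (simp add: dim_submatrix)
  have ent: "S $$ (a,b) = v $$ (p-1+a, p-1+b)" if "a < n-(p-1)" "b < n-(p-1)" for a b
  proof -
    have "pick {p-1..<n} a = p-1+a" "pick {p-1..<n} b = p-1+b" using that by (auto intro!: pick_interval)
    then show ?thesis unfolding S_def using submatrix_index[of a v "{p-1..<n}" b "{p-1..<n}"] that c(1) cR by auto
  qed
  have ut: "upper_triangular S"
  proof (rule upper_triangularI)
    fix a b assume ab: "b < a" "a < dim_row S"
    then have "a < n-(p-1)" "b < n-(p-1)" using SC by auto
    then show "S $$ (a,b) = 0" using ent upper_triangularD[OF c(2), of "p-1+b" "p-1+a"] c(1) ab by auto
  qed
  have "\<forall>a<n-(p-1). S $$ (a,a) = 1" using ent c(3) by auto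
  then have "det S = 1" using det_unitri[OF SC ut] by auto
  then show ?thesis using SC unfolding S_def by auto
qed

lemma det_mul1:
  fixes U S :: "complex mat"
  assumes "U \<in> carrier_mat c c" "det U = 1" "dim_row S = c"
  shows "det (U * S) = det S"
proof (cases "dim_col S = c")
  case True
  then have "S \<in> carrier_mat c c" using assms(3) by auto
  then show ?thesis using det_mult[OF assms(1)] assms(2) by simp
next
  case False
  then show ?thesis using assms unfolding det_def by auto
qed

lemma pathprod_act:
  assumes A: "A \<in> FRep n m r" and u: "u \<in> Ubeta n r"
  shows "k \<le> r \<Longrightarrow> pathprod (act u A) k = u (k+1) * pathprod A k \<and> pathprod A k \<in> carrier_mat n m"
proof (induction k)
  case 0
  then show ?case using A unfolding FRep_def act_def by auto
next
  case (Suc k)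
  have IH: "pathprod (act u A) k = u (k+1) * pathprod A k" "pathprod A k \<in> carrier_mat n m"
    using Suc by auto
  have un: "unitriangular n (u (Suc k))" "unitriangular n (u (Suc k + 1))"
    using u Suc.prems unfolding Ubeta_def by auto
  have U1: "u (Suc k) \<in> carrier_mat n n" and U2: "u (Suc k + 1) \<in> carrier_mat n n"
    using un unfolding unitriangular_def by auto
  have Ak: "A (Suc k) \<in> carrier_mat n n" using A Suc.prems unfolding FRep_def by auto
  have M: "minv (u (Suc k)) * u (Suc k) = 1\<^sub>m n" "minv (u (Suc k)) \<in> carrier_mat n n"
    using minv_props[OF un(1)] by auto
  define P where "P = pathprod A k"
  define U where "U = u (Suc k + 1)"
  define V where "V = u (Suc k)"
  define W where "W = minv (u (Suc k))"
  define B where "B = A (Suc k)"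
  have c: "P \<in> carrier_mat n m" "U \<in> carrier_mat n n" "V \<in> carrier_mat n n" "W \<in> carrier_mat n n"
    "B \<in> carrier_mat n n" "W * V = 1\<^sub>m n"
    using IH U1 U2 M Ak unfolding P_def U_def V_def W_def B_def by auto
  have "(U * B * W) * (V * P) = U * B * (W * (V * P))"
    using c by (meson assoc_mult_mat mult_carrier_mat)
  also have "W * (V * P) = (W * V) * P" using assoc_mult_mat[OF c(4,3,1)] by simp
  also have "\<dots> = P" using c by simp
  also have "U * B * P = U * (B * P)" using c by (meson assoc_mult_mat)
  finally have eq: "(U * B * W) * (V * P) = U * (B * P)" .
  have "pathprod (act u A) (Suc k) = (U * B * W) * (V * P)"
    using IH unfolding act_def U_def B_def W_def V_def P_def by simp
  then show ?case using eq c unfolding U_def B_def P_def by auto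
qed

theorem mainTheorem6:
  fixes n m r p k :: nat and i :: "nat \<Rightarrow> nat"
  assumes "1 \<le> p" "p \<le> n" "k \<le> r"
    and "strict_mono_on {1..n-p+1} i" "\<forall>j\<in>{1..n-p+1}. 1 \<le> i j \<and> i j \<le> m"
  shows "\<forall>A\<in>FRep n m r. \<forall>u\<in>Ubeta n r.
           act u A \<in> FRep n m r \<and>
           minor n p i (pathprod (act u A) k) = minor n p i (pathprod A k)"
proof (intro ballI conjI)
  fix A u assume A: "A \<in> FRep n m r" and u: "u \<in> Ubeta n r"
  have un: "\<And>j. j \<in> {1..r+1} \<Longrightarrow> unitriangular n (u j)" using u unfolding Ubeta_def by auto
  show "act u A \<in> FRep n m r"
    unfolding FRep_def
  proof (intro CollectI conjI ballI)
    show "act u A 0 \<in> carrier_mat n m"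
      using A un[of 1] unfolding act_def FRep_def unitriangular_def by auto
  next
    fix j assume j: "j \<in> {1..r}"
    have a: "unitriangular n (u j)" "unitriangular n (u (j+1))" using un j by auto
    have c: "u j \<in> carrier_mat n n" "u (j+1) \<in> carrier_mat n n" "A j \<in> carrier_mat n n"
      "upper_triangular (u j)" "upper_triangular (u (j+1))" "upper_triangular (A j)"
      "\<forall>i<n. u j $$ (i,i) = 1"
      using a A j unfolding unitriangular_def FRep_def by auto
    have M: "u j * minv (u j) = 1\<^sub>m n" "minv (u j) \<in> carrier_mat n n" using minv_props[OF a(1)] by auto
    have Mu: "upper_triangular (minv (u j))" using inv_upper[OF c(1,4,7) M(2,1)] .
    have e: "act u A j = u (j+1) * A j * minv (u j)" using j unfolding act_def by auto
    show "act u A j \<in> carrier_mat n n" using e c M by auto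
    show "upper_triangular (act u A j)" unfolding e
      by (rule ut_mult[of _ n]) (use c M Mu ut_mult[of "u (j+1)" n "A j"] in auto)
  qed
  have pp: "pathprod (act u A) k = u (k+1) * pathprod A k" "pathprod A k \<in> carrier_mat n m"
    using pathprod_act[OF A u assms(3)] by auto
  have uk: "unitriangular n (u (k+1))" using un assms(3) by auto
  have ukc: "u (k+1) \<in> carrier_mat n n" "upper_triangular (u (k+1))" using uk unfolding unitriangular_def by auto
  define C where "C = (\<lambda>j. i j - 1) ` {1..n-p+1}"
  have sR: "{i. i<n \<and> i\<in>{p-1..<n}} = {p-1..<n}" by auto
  have dr: "dim_row (submatrix (pathprod A k) {p-1..<n} C) = n-(p-1)"
    using pp(2) sR by (simp add: dim_submatrix)
  have "minor n p i (pathprod (act u A) k) = det (submatrix (u (k+1) * pathprod A k) {p-1..<n} C)"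
    unfolding minor_def C_def pp(1) ..
  also have "\<dots> = det (submatrix (u (k+1)) {p-1..<n} {p-1..<n} * submatrix (pathprod A k) {p-1..<n} C)"
    using sub_mult[OF ukc pp(2) assms(1,2)] by simp
  also have "\<dots> = det (submatrix (pathprod A k) {p-1..<n} C)"
    using sub_det1[OF uk assms(1,2)] dr by (intro det_mul1) auto
  also have "\<dots> = minor n p i (pathprod A k)" unfolding minor_def C_def ..
  finally show "minor n p i (pathprod (act u A) k) = minor n p i (pathprod A k)" .
qed

end
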